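(* Let $A_0$ be a group with finite presentation $\langle\mathcal A:\mathcal R\rangle$, let $q:F(\mathcal A)\to A_0$ be the quotient map with $q(a)=a$, and let $\phi_0:A_0\to A_0$ be a homomorphism with nontrivial kernel $K_0$ and $\phi:F(\mathcal A)\to F(\mathcal A)$ a homomorphism such that $q\circ\phi=\phi_0\circ q$. If the ascending sequence $K_i=\phi_0^{-i}(K_0)=\ker(\phi_0^{i+1})$ of normal subgroups of $A_0$ does not stabilize (in particular, when $\phi_0$ is an epimorphism), then the group $G$ with ascending HNN presentation $\mathcal P=\langle t,\mathcal A:\mathcal R,\ t^{-1}at=\phi(a)\ \text{for all } a\in\mathcal A\rangle$ has unbounded depth.
   Context: $F(\mathcal A)$ is the free group on the finite set $\mathcal A$. Let $N_0=N(\bigcup_{j\ge0}\phi^j(\mathcal R))$ be the normal closure in $F(\mathcal A)$ of $\bigcup_{j\ge 0}\phi^j(\mathcal R)$ and $N^\infty=\bigcup_{i\ge0}\phi^{-i}(N_0)$. The presentation $\mathcal P$ has bounded depth if $N^\infty=\bigcup_{i=0}^B\phi^{-i}(N_0)$ for some integer $B\ge0$, and unbounded depth otherwise. *)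

theory Defs
  imports "HOL-Algebra.Algebra"
begin

text \<open>Free group F(A) on a set A, realised concretely as reduced words.
A letter (a, True) stands for a, the letter (a, False) for a inverse.\<close>

fun free_reduce :: "('a \<times> bool) list \<Rightarrow> ('a \<times> bool) list" where
  "free_reduce [] = []"
| "free_reduce (x # xs) =
     (case free_reduce xs of
        [] \<Rightarrow> [x]
      | y # ys \<Rightarrow> (if fst x = fst y \<and> snd x \<noteq> snd y then ys else x # y # ys))"

definition free_group :: "'a set \<Rightarrow> ('a \<times> bool) list monoid" where
  "free_group A = \<lparr> carrier = {w. set w \<subseteq> A \<times> UNIV \<and> free_reduce w = w},
                    monoid.mult = (\<lambda>x y. free_reduce (x @ y)),
                    one = [] \<rparr>"

definition normal_closure :: "('a, 'm) monoid_scheme \<Rightarrow> 'a set \<Rightarrow> 'a set" where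
  "normal_closure G S = \<Inter> {H. H \<lhd> G \<and> S \<subseteq> H}"

definition depth_N0 :: "'a set \<Rightarrow> ('a \<times> bool) list set \<Rightarrow>
      (('a \<times> bool) list \<Rightarrow> ('a \<times> bool) list) \<Rightarrow> ('a \<times> bool) list set" where
  "depth_N0 A R \<phi> = normal_closure (free_group A) (\<Union>j. (\<phi> ^^ j) ` R)"

definition depth_layer :: "'a set \<Rightarrow> ('a \<times> bool) list set \<Rightarrow>
      (('a \<times> bool) list \<Rightarrow> ('a \<times> bool) list) \<Rightarrow> nat \<Rightarrow> ('a \<times> bool) list set" where
  "depth_layer A R \<phi> i = {x \<in> carrier (free_group A). (\<phi> ^^ i) x \<in> depth_N0 A R \<phi>}"

definition depth_Ninf :: "'a set \<Rightarrow> ('a \<times> bool) list set \<Rightarrow>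
      (('a \<times> bool) list \<Rightarrow> ('a \<times> bool) list) \<Rightarrow> ('a \<times> bool) list set" where
  "depth_Ninf A R \<phi> = (\<Union>i. depth_layer A R \<phi> i)"

definition bounded_depth :: "'a set \<Rightarrow> ('a \<times> bool) list set \<Rightarrow>
      (('a \<times> bool) list \<Rightarrow> ('a \<times> bool) list) \<Rightarrow> bool" where
  "bounded_depth A R \<phi> \<longleftrightarrow> (\<exists>B::nat. depth_Ninf A R \<phi> = (\<Union>i\<in>{0..B}. depth_layer A R \<phi> i))"

abbreviation unbounded_depth where
  "unbounded_depth A R \<phi> \<equiv> \<not> bounded_depth A R \<phi>"

end

theory Submission
  imports Defs
begin

lemma nc_mono0:
  assumes "U \<subseteq> V" shows "\<Inter> {H. P H \<and> U \<subseteq> H} \<subseteq> \<Inter> {H. P H \<and> V \<subseteq> H}"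
  using assms by blast

theorem theorem4p5:
  fixes A :: "'a set" and R :: "('a \<times> bool) list set"
    and A0 :: "'b monoid" and q :: "('a \<times> bool) list \<Rightarrow> 'b"
    and \<phi>0 :: "'b \<Rightarrow> 'b" and \<phi> :: "('a \<times> bool) list \<Rightarrow> ('a \<times> bool) list"
  assumes "finite A" and "finite R" and "R \<subseteq> carrier (free_group A)"
    and "group A0"
    and "q \<in> hom (free_group A) A0"
    and "q ` carrier (free_group A) = carrier A0"
    and "kernel (free_group A) A0 q = normal_closure (free_group A) R"
    and "\<phi>0 \<in> hom A0 A0"
    and "kernel A0 A0 \<phi>0 \<noteq> {\<one>\<^bsub>A0\<^esub>}"
    and "\<phi> \<in> hom (free_group A) (free_group A)"
    and "\<forall>x\<in>carrier (free_group A). q (\<phi> x) = \<phi>0 (q x)"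
    and "\<not> (\<exists>n. \<forall>m\<ge>n.
            {x \<in> carrier A0. (\<phi>0 ^^ m) x \<in> kernel A0 A0 \<phi>0}
          = {x \<in> carrier A0. (\<phi>0 ^^ n) x \<in> kernel A0 A0 \<phi>0})"
  shows "unbounded_depth A R \<phi>"
proof -
  let ?F = "free_group A"
  let ?K = "\<lambda>m. {y \<in> carrier A0. (\<phi>0 ^^ m) y = \<one>\<^bsub>A0\<^esub>}"
  note as = assms
  have gA: "group_hom A0 A0 \<phi>0" using as(4,8) by (simp add: group_hom_def group_hom_axioms_def)
  have p1: "\<phi>0 \<one>\<^bsub>A0\<^esub> = \<one>\<^bsub>A0\<^esub>" using gA group_hom.hom_one by blast
  have pc: "\<And>y. y \<in> carrier A0 \<Longrightarrow> \<phi>0 y \<in> carrier A0" using as(8) by (simp add: hom_def Pi_def)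
  have pkc: "\<And>k y. y \<in> carrier A0 \<Longrightarrow> (\<phi>0 ^^ k) y \<in> carrier A0"
  proof -
    fix k y assume "y \<in> carrier A0" thus "(\<phi>0 ^^ k) y \<in> carrier A0" by (induction k) (auto intro: pc)
  qed
  have pk1: "\<And>k. (\<phi>0 ^^ k) \<one>\<^bsub>A0\<^esub> = \<one>\<^bsub>A0\<^esub>"
  proof -
    fix k show "(\<phi>0 ^^ k) \<one>\<^bsub>A0\<^esub> = \<one>\<^bsub>A0\<^esub>" by (induction k) (auto simp: p1)
  qed
  have Kmono: "\<And>i j. i \<le> j \<Longrightarrow> ?K i \<subseteq> ?K j"
  proof -
    fix i j :: nat assume "i \<le> j"
    then obtain k where j: "j = k + i" by (metis add.commute le_add_diff_inverse)
    show "?K i \<subseteq> ?K j" unfolding j funpow_add by (auto simp: pk1)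
  qed
  have fc: "\<And>x. x \<in> carrier ?F \<Longrightarrow> \<phi> x \<in> carrier ?F" using as(10) by (simp add: hom_def Pi_def)
  have qc: "\<And>x. x \<in> carrier ?F \<Longrightarrow> q x \<in> carrier A0" using as(5) by (simp add: hom_def Pi_def)
  have fkc: "\<And>k x. x \<in> carrier ?F \<Longrightarrow> (\<phi> ^^ k) x \<in> carrier ?F"
  proof -
    fix k x assume "x \<in> carrier ?F" thus "(\<phi> ^^ k) x \<in> carrier ?F" by (induction k) (auto intro: fc)
  qed
  have qk: "\<And>k x. x \<in> carrier ?F \<Longrightarrow> q ((\<phi> ^^ k) x) = (\<phi>0 ^^ k) (q x)"
  proof -
    fix k x assume x: "x \<in> carrier ?F" thus "q ((\<phi> ^^ k) x) = (\<phi>0 ^^ k) (q x)"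
      by (induction k) (auto simp: as(11) fkc)
  qed
  have Rsub: "R \<subseteq> normal_closure ?F R" unfolding normal_closure_def by blast
  have phiker: "\<And>x. x \<in> kernel ?F A0 q \<Longrightarrow> \<phi> x \<in> kernel ?F A0 q"
    using fc as(11) p1 by (auto simp: kernel_def)
  have Sker: "(\<Union>j. (\<phi> ^^ j) ` R) \<subseteq> kernel ?F A0 q"
  proof (clarify)
    fix j r assume r: "r \<in> R"
    show "(\<phi> ^^ j) r \<in> kernel ?F A0 q"
      by (induction j) (use r Rsub as(7) phiker in auto)
  qed
  have N0: "depth_N0 A R \<phi> = kernel ?F A0 q"
  proof (cases "\<exists>H. H \<lhd> ?F")
    case True
    then obtain H where "H \<lhd> ?F" by blast
    hence gF: "group ?F" by (simp add: normal_def)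
    have "group_hom ?F A0 q" using gF as(4,5) by (simp add: group_hom_def group_hom_axioms_def)
    hence nk: "kernel ?F A0 q \<lhd> ?F" by (rule group_hom.normal_kernel)
    have "depth_N0 A R \<phi> \<subseteq> kernel ?F A0 q"
      unfolding depth_N0_def normal_closure_def using nk Sker by blast
    moreover have "kernel ?F A0 q \<subseteq> depth_N0 A R \<phi>"
      unfolding depth_N0_def as(7) normal_closure_def
    proof (rule nc_mono0)
      have "(\<phi> ^^ 0) ` R = R" by simp
      thus "R \<subseteq> (\<Union>j. (\<phi> ^^ j) ` R)" by blast
    qed
    ultimately show ?thesis by blast
  next
    case False
    hence "\<And>Z. normal_closure ?F Z = UNIV" unfolding normal_closure_def by blast
    thus ?thesis unfolding depth_N0_def as(7) by simp
  qed
  have layer: "\<And>i. depth_layer A R \<phi> i = {x \<in> carrier ?F. q x \<in> ?K i}"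
    unfolding depth_layer_def N0 kernel_def using fkc qk qc by auto
  have hypK: "\<And>m. {x \<in> carrier A0. (\<phi>0 ^^ m) x \<in> kernel A0 A0 \<phi>0} = ?K (Suc m)"
    unfolding kernel_def using pkc by auto
  show ?thesis
  proof
    assume "bounded_depth A R \<phi>"
    then obtain B where B: "depth_Ninf A R \<phi> = (\<Union>i\<in>{0..B}. depth_layer A R \<phi> i)"
      unfolding bounded_depth_def by blast
    have "\<forall>m\<ge>B. ?K (Suc m) = ?K (Suc B)"
    proof (intro allI impI)
      fix m assume mB: "B \<le> m"
      show "?K (Suc m) = ?K (Suc B)"
      proof
        show "?K (Suc B) \<subseteq> ?K (Suc m)" by (rule Kmono) (use mB in simp)
        show "?K (Suc m) \<subseteq> ?K (Suc B)"
        proof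
          fix y assume y: "y \<in> ?K (Suc m)"
          have "y \<in> q ` carrier ?F" using y as(6) by simp
          then obtain x where x: "x \<in> carrier ?F" "y = q x" by (rule imageE)
          have "x \<in> depth_layer A R \<phi> (Suc m)" unfolding layer using x y by simp
          hence "x \<in> depth_Ninf A R \<phi>" unfolding depth_Ninf_def by (rule UN_I[OF UNIV_I])
          hence "x \<in> (\<Union>i\<in>{0..B}. depth_layer A R \<phi> i)" using B by simp
          then obtain i where i: "i \<in> {0..B}" "x \<in> depth_layer A R \<phi> i" by (rule UN_E)
          hence "y \<in> ?K i" unfolding layer using x by simp
          moreover have "?K i \<subseteq> ?K (Suc B)" by (rule Kmono) (use i in simp)
          ultimately show "y \<in> ?K (Suc B)" by (rule rev_subsetD)
        qed
      qed
    qed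
    thus False using as(12) unfolding hypK by blast
  qed
qed

end
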